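(* Let $f\in\mathbb{Q}[x]$ be a non-zero polynomial of degree $n$ and let $g\in\mathbb{Q}[x]$ be such that $\gcd(f,g)$ and $f/\gcd(f,g)$ are relatively prime. Assume that $g(\xi)\ge 0$ for every real root $\xi$ of $f$. Then there exist $N\in\mathbb{N}$, positive rational weights $\omega_1,\dots,\omega_N\in\mathbb{Q}_{>0}$ and polynomials $h_1,\dots,h_N\in\mathbb{Q}[x]$, each of degree $<n$, such that $$h:=\sum_{i=1}^N \omega_i h_i^2 \quad\text{satisfies}\quad h\equiv g \pmod f.$$ *)

theory Defs
  imports "HOL-Computational_Algebra.Polynomial_Factorial" "HOL-Computational_Algebra.Field_as_Ring"
begin

end

theory Submission
  imports Defs "HOL-Analysis.Analysis"
begin

inductive wsos :: "rat poly \<Rightarrow> bool" where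
  wsos0: "wsos 0"
| wsosI: "wsos p \<Longrightarrow> c > 0 \<Longrightarrow> wsos (p + smult c (h^2))"

lemma wsos_add_aux: "wsos q \<Longrightarrow> wsos p \<Longrightarrow> wsos (p + q)"
proof (induction q rule: wsos.induct)
  case wsos0 then show ?case by simp
next
  case (wsosI q c h)
  have "wsos ((p + q) + smult c (h^2))" using wsosI by (intro wsos.wsosI) auto
  then show ?case by (simp add: add.assoc)
qed

lemma wsos_add: "wsos p \<Longrightarrow> wsos q \<Longrightarrow> wsos (p + q)"
  using wsos_add_aux by blast

lemma wsos_term: "c \<ge> 0 \<Longrightarrow> wsos (smult c (h^2))"
proof (cases "c = 0")
  case True then show ?thesis by (simp add: wsos0)
next
  case False
  assume "c \<ge> 0"
  then have "wsos (0 + smult c (h^2))" using False by (intro wsosI wsos0) auto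
  then show ?thesis by simp
qed

lemma wsos_sum: "finite A \<Longrightarrow> (\<And>i. i \<in> A \<Longrightarrow> wsos (F i)) \<Longrightarrow> wsos (sum F A)"
  by (induction A rule: finite_induct) (auto intro: wsos0 wsos_add)

lemma wsos_mult_sq: "wsos p \<Longrightarrow> wsos (k^2 * p)"
proof (induction p rule: wsos.induct)
  case wsos0 then show ?case by (simp add: wsos.wsos0)
next
  case (wsosI p c h)
  have "k^2 * (p + smult c (h^2)) = k^2 * p + smult c ((k*h)^2)"
    by (simp add: algebra_simps power_mult_distrib)
  then show ?case using wsosI by (auto intro: wsos.wsosI)
qed

lemma wsos_repr:
  "wsos p \<Longrightarrow> \<exists>(N::nat) (\<omega>::nat \<Rightarrow> rat) (h::nat \<Rightarrow> rat poly).
     (\<forall>i\<in>{1..N}. \<omega> i > 0) \<and> p = (\<Sum>i=1..N. smult (\<omega> i) ((h i)\<^sup>2))"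
proof (induction p rule: wsos.induct)
  case wsos0
  show ?case by (rule exI[of _ 0]) simp
next
  case (wsosI p c h)
  from wsosI.IH obtain N :: nat and \<omega> :: "nat \<Rightarrow> rat" and hh :: "nat \<Rightarrow> rat poly" where IH: "\<forall>i\<in>{1..N}. \<omega> i > 0" "p = (\<Sum>i=1..N. smult (\<omega> i) ((hh i)\<^sup>2))"
    by (elim exE conjE)
  define \<omega>' where "\<omega>' = fun_upd \<omega> (Suc N) c"
  define hh' where "hh' = fun_upd hh (Suc N) h"
  have "(\<Sum>i=1..Suc N. smult (\<omega>' i) ((hh' i)\<^sup>2)) = (\<Sum>i=1..N. smult (\<omega>' i) ((hh' i)\<^sup>2)) + smult c (h^2)"
    by (simp add: \<omega>'_def hh'_def)
  also have "(\<Sum>i=1..N. smult (\<omega>' i) ((hh' i)\<^sup>2)) = p"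
    unfolding IH(2) by (intro sum.cong) (auto simp: \<omega>'_def hh'_def)
  finally show ?case using IH(1) wsosI
    by (intro exI[of _ "Suc N"] exI[of _ \<omega>'] exI[of _ hh']) (auto simp: \<omega>'_def)
qed

definition Rp :: "rat poly \<Rightarrow> real poly" where "Rp p = map_poly of_rat p"

lemma coeff_Rp [simp]: "coeff (Rp p) n = of_rat (coeff p n)"
  by (simp add: Rp_def coeff_map_poly)

lemma Rp_add [simp]: "Rp (p + q) = Rp p + Rp q"
  by (rule poly_eqI) (simp add: of_rat_add)

lemma Rp_diff [simp]: "Rp (p - q) = Rp p - Rp q"
  by (rule poly_eqI) (simp add: of_rat_diff)

lemma Rp_mult [simp]: "Rp (p * q) = Rp p * Rp q"
  by (rule poly_eqI) (simp add: coeff_mult of_rat_sum of_rat_mult)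

lemma Rp_smult [simp]: "Rp (smult c p) = smult (of_rat c) (Rp p)"
  by (rule poly_eqI) (simp add: of_rat_mult)

lemma Rp_pCons [simp]: "Rp (pCons a p) = pCons (of_rat a) (Rp p)"
  by (rule poly_eqI) (simp add: coeff_pCons split: nat.splits)

lemma Rp_0 [simp]: "Rp 0 = 0"
  by (rule poly_eqI) simp

lemma Rp_1 [simp]: "Rp 1 = 1"
  by (rule poly_eqI) (simp add: coeff_1)

lemma Rp_power [simp]: "Rp (p ^ k) = (Rp p) ^ k"
  by (induction k) simp_all

lemma Rp_monom [simp]: "Rp (monom c k) = monom (of_rat c) k"
  by (rule poly_eqI) (simp add: coeff_monom)

lemma Rp_sum [simp]: "Rp (sum F A) = (\<Sum>i\<in>A. Rp (F i))"
  by (induction A rule: infinite_finite_induct) simp_all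

lemma degree_Rp [simp]: "degree (Rp p) = degree p"
  by (simp add: Rp_def degree_map_poly)

lemma pos_combination:
  fixes a b :: "real poly"
  assumes b0: "\<And>x. poly b x \<ge> 0" and ba: "\<And>x. poly b x = 0 \<Longrightarrow> poly a x > 0"
    and deg: "degree a < degree b"
  shows "\<exists>c. \<forall>c'\<ge>c. \<forall>x. poly a x + c' * poly b x > 0"
proof -
  have bnz: "b \<noteq> 0" using deg by auto
  have "((\<lambda>x. poly a x / poly b x) \<longlongrightarrow> 0) at_infinity"
    using poly_divide_tendsto_0_at_infinity[OF deg] .
  then have ev1: "eventually (\<lambda>x. dist (poly a x / poly b x) 0 < 1) at_infinity"
    by (rule tendstoD) simp
  have ev2: "eventually (\<lambda>x. poly b x \<noteq> 0) at_infinity"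
    using poly_eventually_not_zero[OF bnz] .
  have "eventually (\<lambda>x. \<bar>poly a x\<bar> < poly b x) at_infinity"
    using ev1 ev2
  proof eventually_elim
    case (elim x)
    then have bp: "poly b x > 0" using b0[of x] by linarith
    from elim have "\<bar>poly a x\<bar> / poly b x < 1" using bp by (simp add: dist_real_def abs_divide)
    then show ?case using bp by (simp add: pos_divide_less_eq)
  qed
  then obtain R where R: "\<And>x. norm x \<ge> R \<Longrightarrow> \<bar>poly a x\<bar> < poly b x"
    unfolding eventually_at_infinity by blast
  define K where "K = cball (0::real) R \<inter> {x. poly a x \<le> 0}"
  have "closed {x::real. poly a x \<le> 0}"
    by (intro closed_Collect_le continuous_intros)
  then have cK: "compact K" unfolding K_def by (intro compact_Int_closed) auto
  have bK: "\<And>x. x \<in> K \<Longrightarrow> poly b x > 0"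
  proof -
    fix x assume "x \<in> K"
    then have "poly a x \<le> 0" by (simp add: K_def)
    then have "poly b x \<noteq> 0" using ba by force
    then show "poly b x > 0" using b0[of x] by linarith
  qed
  have "continuous_on K (\<lambda>x. poly a x / poly b x)"
    using bK by (intro continuous_intros) (fastforce dest: bK)
  then have "compact ((\<lambda>x. poly a x / poly b x) ` K)"
    using cK by (rule compact_continuous_image)
  then have "bounded ((\<lambda>x. poly a x / poly b x) ` K)" by (rule compact_imp_bounded)
  then obtain M where M0: "\<forall>y\<in>(\<lambda>x. poly a x / poly b x) ` K. norm y \<le> M"
    unfolding bounded_iff by blast
  then have M: "\<And>x. x \<in> K \<Longrightarrow> \<bar>poly a x / poly b x\<bar> \<le> M" by auto
  show ?thesis
  proof (intro exI[of _ "\<bar>M\<bar> + 1"] allI impI)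
    fix c' x :: real assume c': "c' \<ge> \<bar>M\<bar> + 1"
    show "poly a x + c' * poly b x > 0"
    proof (cases "norm x \<ge> R")
      case True
      then have "\<bar>poly a x\<bar> < poly b x" by (rule R)
      moreover have "c' * poly b x \<ge> 1 * poly b x"
        using c' b0[of x] by (intro mult_right_mono) auto
      ultimately show ?thesis by linarith
    next
      case False
      show ?thesis
      proof (cases "poly a x \<le> 0")
        case True
        then have xK: "x \<in> K" using False by (auto simp: K_def)
        then have bp: "poly b x > 0" by (rule bK)
        have "\<bar>poly a x / poly b x\<bar> \<le> M" using M[OF xK] .
        then have "- M \<le> poly a x / poly b x" by linarith
        then have "- M * poly b x \<le> poly a x"
          using bp by (simp add: pos_le_divide_eq)
        moreover have "c' * poly b x \<ge> (M + 1) * poly b x"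
          using c' bp by (intro mult_right_mono) auto
        ultimately show ?thesis using bp by (simp add: algebra_simps)
      next
        case False
        then show ?thesis using c' b0[of x]
          by (smt (verit) mult_nonneg_nonneg)
      qed
    qed
  qed
qed

lemma pos_combination2:
  fixes a b :: "real poly"
  assumes b0: "\<And>x. poly b x \<ge> 0" and ba: "\<And>x. poly b x = 0 \<Longrightarrow> poly a x > 0"
    and deg: "degree a \<le> degree b" and bnz: "b \<noteq> 0"
  shows "\<exists>c. \<forall>c'\<ge>c. \<forall>x. poly a x + c' * poly b x > 0"
proof -
  define \<kappa> where "\<kappa> = coeff a (degree b) / lead_coeff b"
  define a1 where "a1 = a - smult \<kappa> b"
  have pa1: "poly a x = poly a1 x + \<kappa> * poly b x" for x by (simp add: a1_def)
  have ba1: "poly b x = 0 \<Longrightarrow> poly a1 x > 0" for x using ba[of x] pa1[of x] by simp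
  show ?thesis
  proof (cases "a1 = 0")
    case True
    then have bpos: "poly b x > 0" for x using ba1[of x] b0[of x] by force
    show ?thesis
    proof (intro exI[of _ "\<bar>\<kappa>\<bar> + 1"] allI impI)
      fix c' x :: real assume "c' \<ge> \<bar>\<kappa>\<bar> + 1"
      then have "\<kappa> + c' > 0" by linarith
      then have "(\<kappa> + c') * poly b x > 0" using bpos[of x] by simp
      then show "poly a x + c' * poly b x > 0" using pa1[of x] True by (simp add: algebra_simps)
    qed
  next
    case False
    have d1: "degree a1 \<le> degree b"
      unfolding a1_def using deg by (intro degree_diff_le) auto
    have c1: "coeff a1 (degree b) = 0"
      using bnz by (simp add: a1_def \<kappa>_def)
    have "degree a1 \<noteq> degree b"
    proof
      assume "degree a1 = degree b"
      then have "lead_coeff a1 = 0" using c1 by simp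
      then show False using False by simp
    qed
    then have "degree a1 < degree b" using d1 by simp
    from pos_combination[OF b0 ba1 this] obtain c where c: "\<forall>c'\<ge>c. \<forall>x. poly a1 x + c' * poly b x > 0"
      by blast
    show ?thesis
    proof (intro exI[of _ "c + \<bar>\<kappa>\<bar>"] allI impI)
      fix c' x :: real assume "c' \<ge> c + \<bar>\<kappa>\<bar>"
      then have "\<kappa> + c' \<ge> c" by linarith
      then have "poly a1 x + (\<kappa> + c') * poly b x > 0" using c by blast
      then show "poly a x + c' * poly b x > 0" using pa1[of x] by (simp add: algebra_simps)
    qed
  qed
qed

lemma poly_min_exists:
  fixes s :: "real poly"
  assumes s0: "\<And>x. poly s x \<ge> 0" and deg: "degree s > 0"
  shows "\<exists>t. \<forall>x. poly s t \<le> poly s x"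
proof -
  have "filterlim (poly s) at_infinity at_infinity"
    using filterlim_poly_at_infinity[OF deg] .
  then have "filterlim (\<lambda>x. norm (poly s x)) at_top at_infinity"
    by (rule filterlim_at_infinity_imp_norm_at_top)
  then have "eventually (\<lambda>x. norm (poly s x) \<ge> poly s 0 + 1) at_infinity"
    by (simp add: filterlim_at_top)
  then obtain R where R: "\<And>x. norm x \<ge> R \<Longrightarrow> norm (poly s x) \<ge> poly s 0 + 1"
    unfolding eventually_at_infinity by blast
  have "\<exists>t\<in>cball 0 \<bar>R\<bar>. \<forall>y\<in>cball 0 \<bar>R\<bar>. poly s t \<le> poly s y"
    by (intro continuous_attains_inf) (auto intro: continuous_intros)
  then obtain t where t: "t \<in> cball 0 \<bar>R\<bar>" "\<And>y. y \<in> cball 0 \<bar>R\<bar> \<Longrightarrow> poly s t \<le> poly s y"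
    by blast
  have t0: "poly s t \<le> poly s 0" using t(2)[of 0] by simp
  show ?thesis
  proof (intro exI allI)
    fix x :: real
    show "poly s t \<le> poly s x"
    proof (cases "x \<in> cball 0 \<bar>R\<bar>")
      case True then show ?thesis by (rule t(2))
    next
      case False
      then have "norm x \<ge> R" by auto
      then have "norm (poly s x) \<ge> poly s 0 + 1" by (rule R)
      then show ?thesis using t0 s0[of x] by simp
    qed
  qed
qed

lemma double_root:
  fixes p :: "real poly"
  assumes "poly p t = 0" "poly (pderiv p) t = 0"
  shows "[:-t, 1:]^2 dvd p"
proof -
  from assms(1) obtain q where q: "p = [:-t, 1:] * q"
    by (auto simp: poly_eq_0_iff_dvd elim: dvdE)
  have d: "pderiv [:-t,1:] = 1" by (simp add: pderiv_pCons)
  have "pderiv p = [:-t,1:] * pderiv q + q"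
    unfolding q pderiv_mult d by simp
  then have "poly q t = 0" using assms(2) by simp
  then obtain q2 where q2: "q = [:-t, 1:] * q2"
    by (auto simp: poly_eq_0_iff_dvd elim: dvdE)
  have "p = [:-t, 1:]^2 * q2" unfolding q q2 power2_eq_square by (rule mult.assoc[symmetric])
  then show ?thesis by simp
qed

lemma rat_seq:
  fixes c :: real
  shows "\<exists>r::nat \<Rightarrow> rat. (\<forall>n. of_rat (r n) > c) \<and> (\<lambda>n. of_rat (r n)) \<longlonglongrightarrow> c"
proof -
  have "\<forall>n. \<exists>q::rat. c < of_rat q \<and> of_rat q < c + inverse (real (Suc n))"
  proof
    fix n
    have "c < c + inverse (real (Suc n))" by simp
    then obtain y where "y \<in> \<rat>" "c < y" "y < c + inverse (real (Suc n))"
      using Rats_dense_in_real by blast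
    then show "\<exists>q::rat. c < of_rat q \<and> of_rat q < c + inverse (real (Suc n))"
      by (auto elim: Rats_cases)
  qed
  then obtain r :: "nat \<Rightarrow> rat" where r: "\<And>n. c < of_rat (r n) \<and> of_rat (r n) < c + inverse (real (Suc n))"
    by metis
  have lim: "(\<lambda>n. c + inverse (real (Suc n))) \<longlonglongrightarrow> c"
    using tendsto_add[OF tendsto_const LIMSEQ_inverse_real_of_nat, of c] by simp
  have e1: "eventually (\<lambda>n. c \<le> of_rat (r n)) sequentially"
    by (intro always_eventually allI) (use r in \<open>auto intro: less_imp_le\<close>)
  have e2: "eventually (\<lambda>n. of_rat (r n) \<le> c + inverse (real (Suc n))) sequentially"
    by (intro always_eventually allI) (use r in \<open>auto intro: less_imp_le\<close>)
  have "(\<lambda>n. of_rat (r n)) \<longlonglongrightarrow> c"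
    by (rule tendsto_sandwich[OF e1 e2 tendsto_const lim])
  then show ?thesis using r by blast
qed

definition cconv :: "(nat \<Rightarrow> rat poly) \<Rightarrow> real poly \<Rightarrow> bool" where
  "cconv P s \<longleftrightarrow> (\<forall>i. (\<lambda>n. coeff (Rp (P n)) i) \<longlonglongrightarrow> coeff s i)"

lemma cconv_add: "cconv A a \<Longrightarrow> cconv B b \<Longrightarrow> cconv (\<lambda>n. A n + B n) (a + b)"
  unfolding cconv_def by (auto intro: tendsto_add)

lemma cconv_mult: "cconv A a \<Longrightarrow> cconv B b \<Longrightarrow> cconv (\<lambda>n. A n * B n) (a * b)"
  unfolding cconv_def Rp_mult coeff_mult by (auto intro!: tendsto_sum tendsto_mult)

lemma cconv_power: "cconv A a \<Longrightarrow> cconv (\<lambda>n. A n ^ k) (a ^ k)"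
proof (induction k)
  case 0 then show ?case by (simp add: cconv_def)
next
  case (Suc k) then show ?case using cconv_mult[of A a "\<lambda>n. A n ^ k" "a ^ k"] by simp
qed

lemma cconv_const: "(\<lambda>n. of_rat (r n)) \<longlonglongrightarrow> c \<Longrightarrow> cconv (\<lambda>n. [:r n:]) [:c:]"
  unfolding cconv_def by (auto simp: coeff_pCons split: nat.splits)

lemma cconv_X: "cconv (\<lambda>n. [:0, 1:]) [:0, 1:]"
  unfolding cconv_def by (simp add: coeff_pCons split: nat.splits)

lemma wsos_const: "r > 0 \<Longrightarrow> wsos [:r:]"
  using wsos_term[of r 1] by simp

lemma rat_approx_sos:
  fixes s :: "real poly"
  assumes "\<And>x. poly s x \<ge> 0"
  shows "\<exists>P. (\<forall>n. wsos (P n) \<and> degree (P n) \<le> degree s) \<and> cconv P s"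
  using assms
proof (induction "degree s" arbitrary: s rule: less_induct)
  case less
  show ?case
  proof (cases "degree s = 0")
    case True
    then obtain c where sc: "s = [:c:]" by (auto elim: degree_eq_zeroE)
    have c0: "c \<ge> 0" using less.prems[of 0] sc by simp
    obtain r where r: "\<forall>n. of_rat (r n) > c" "(\<lambda>n. of_rat (r n)) \<longlonglongrightarrow> c"
      using rat_seq by blast
    have rpos: "r n > 0" for n
    proof -
      have "(0::real) < of_rat (r n)" using r(1) c0 by (meson le_less_trans)
      then show ?thesis by simp
    qed
    show ?thesis
      by (intro exI[of _ "\<lambda>n. [:r n:]"] conjI allI)
         (auto simp: sc intro: wsos_const rpos cconv_const r(2))
  next
    case False
    obtain t where t: "\<And>x. poly s t \<le> poly s x" using poly_min_exists less.prems False by blast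
    define \<mu> where "\<mu> = poly s t"
    have \<mu>0: "\<mu> \<ge> 0" using less.prems unfolding \<mu>_def by blast
    have dz: "poly (pderiv s) t = 0"
      by (rule DERIV_local_min[OF poly_DERIV zero_less_one]) (auto intro: t)
    have "[:-t, 1:]^2 dvd (s - [:\<mu>:])"
      by (rule double_root) (simp_all add: \<mu>_def pderiv_diff dz pderiv_pCons)
    then obtain s2 where s2: "s - [:\<mu>:] = [:-t, 1:]^2 * s2" by (elim dvdE)
    then have hs: "s = [:\<mu>:] + [:-t, 1:]^2 * s2" by (simp add: algebra_simps)
    have s2nz: "s2 \<noteq> 0"
    proof
      assume "s2 = 0"
      then have "s = [:\<mu>:]" using hs by simp
      then show False using False by simp
    qed
    have dq: "degree ([:-t, 1:]^2 * s2) = 2 + degree s2"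
      using s2nz by (simp add: degree_mult_eq degree_linear_power)
    have degs: "degree s = 2 + degree s2"
      unfolding hs by (subst degree_add_eq_right) (simp_all add: dq)
    have ps: "poly s x = \<mu> + (x - t)^2 * poly s2 x" for x
      unfolding hs by simp
    have s2pos': "poly s2 x \<ge> 0" if "x \<noteq> t" for x
    proof -
      have "\<mu> \<le> poly s x" using t unfolding \<mu>_def by blast
      then have "(x - t)^2 * poly s2 x \<ge> 0" using ps[of x] by simp
      moreover have "(x - t)^2 > 0" using that by simp
      ultimately show ?thesis by (simp add: zero_le_mult_iff)
    qed
    have s2pos: "poly s2 x \<ge> 0" for x
    proof (cases "x = t")
      case True
      have "(poly s2 \<longlongrightarrow> poly s2 t) (at t)"
        by (intro isContD poly_isCont)
      moreover have "eventually (\<lambda>y. 0 \<le> poly s2 y) (at t)"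
        unfolding eventually_at_filter by (auto intro: always_eventually s2pos')
      ultimately have "0 \<le> poly s2 t" by (rule tendsto_lowerbound) simp
      then show ?thesis using True by simp
    next
      case False then show ?thesis by (rule s2pos')
    qed
    have "degree s2 < degree s" using degs by simp
    from less.hyps[OF this s2pos] obtain S where
      S: "\<And>n. wsos (S n)" "\<And>n. degree (S n) \<le> degree s2" "cconv S s2" by blast
    obtain m where m: "\<forall>n. of_rat (m n) > \<mu>" "(\<lambda>n. of_rat (m n)) \<longlonglongrightarrow> \<mu>"
      using rat_seq by blast
    have mpos: "m n > 0" for n
    proof -
      have "(0::real) < of_rat (m n)" using m(1) \<mu>0 by (meson le_less_trans)
      then show ?thesis by simp
    qed
    obtain \<tau> where \<tau>: "(\<lambda>n. of_rat (\<tau> n)) \<longlonglongrightarrow> t"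
      using rat_seq by blast
    define P where "P n = [:m n:] + [:-\<tau> n, 1:]^2 * S n" for n
    have wP: "wsos (P n)" for n
      unfolding P_def by (intro wsos_add wsos_const mpos wsos_mult_sq S)
    have dP: "degree (P n) \<le> degree s" for n
    proof -
      have "degree ([:-\<tau> n, 1:]^2 * S n) \<le> 2 + degree (S n)"
        by (rule order_trans[OF degree_mult_le]) (simp add: degree_linear_power)
      then have "degree ([:-\<tau> n, 1:]^2 * S n) \<le> degree s" using S(2)[of n] degs by simp
      then show ?thesis unfolding P_def by (intro degree_add_le) simp_all
    qed
    have c1: "cconv (\<lambda>n. [:-\<tau> n:] + [:0, 1:]) ([:-t:] + [:0,1:])"
      by (intro cconv_add cconv_X cconv_const) (use \<tau> in \<open>auto simp: of_rat_minus intro: tendsto_minus\<close>)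
    have c2: "cconv (\<lambda>n. [:m n:] + ([:-\<tau> n:] + [:0, 1:])^2 * S n) ([:\<mu>:] + ([:-t:] + [:0,1:])^2 * s2)"
      by (intro cconv_add cconv_mult cconv_power c1 S(3) cconv_const m(2))
    have "cconv P s"
      using c2 unfolding P_def hs by simp
    then show ?thesis using wP dP by blast
  qed
qed

definition Wp :: "nat \<Rightarrow> rat poly" where
  "Wp M = (\<Sum>k\<le>2*M. monom 1 (2*(k div 2)) + monom 1 (2*(k - k div 2)))"

lemma smult_sum_right: "smult r (sum f A) = (\<Sum>i\<in>A. smult r (f i))"
  by (induction A rule: infinite_finite_induct) (simp_all add: smult_add_right)

lemma of_rat_abs': "\<bar>(of_rat x :: real)\<bar> = of_rat \<bar>x\<bar>"
  by (simp add: abs_if of_rat_minus)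

lemma dom_term:
  fixes e r :: rat assumes er: "\<bar>e\<bar> \<le> 2*r"
  shows "wsos (monom e (i+j) + smult r (monom 1 (2*i) + monom 1 (2*j)))"
proof -
  define \<sigma> :: rat where "\<sigma> = (if e \<ge> 0 then 1 else -1)"
  have s2: "\<sigma> * \<sigma> = 1" and es: "\<bar>e\<bar> * \<sigma> = e" by (auto simp: \<sigma>_def)
  define A where "A = monom (1::rat) i"
  define B where "B = monom \<sigma> j"
  have sq: "(A+B)^2 = monom 1 (2*i) + monom (2*\<sigma>) (i+j) + monom (\<sigma>*\<sigma>) (2*j)"
  proof -
    have "(A+B)^2 = A*A + (A*B + A*B) + B*B" by (simp add: power2_eq_square algebra_simps)
    also have "\<dots> = monom 1 (2*i) + (monom \<sigma> (i+j) + monom \<sigma> (i+j)) + monom (\<sigma>*\<sigma>) (2*j)"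
      by (simp add: A_def B_def mult_monom mult_2[of i] mult_2[of j])
    also have "monom \<sigma> (i+j) + monom \<sigma> (i+j) = monom (2*\<sigma>) (i+j)"
      by (simp add: add_monom)
    finally show ?thesis .
  qed
  have sqA: "(monom (1::rat) i)^2 = monom 1 (2*i)" by (simp add: monom_power mult.commute)
  have sqB: "(monom (1::rat) j)^2 = monom 1 (2*j)" by (simp add: monom_power mult.commute)
  have eq0: "smult (\<bar>e\<bar> / 2) (monom 1 (2 * i) + monom (2 * \<sigma>) (i + j) + monom 1 (2 * j)) +
        smult (r - \<bar>e\<bar> / 2) (monom 1 (2 * i)) + smult (r - \<bar>e\<bar> / 2) (monom 1 (2 * j))
      = monom e (i + j) + smult r (monom 1 (2 * i) + monom 1 (2 * j))"
  proof -
    have e2: "\<bar>e\<bar> / 2 * (2 * \<sigma>) = e" using es by simp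
    have m1: "monom (\<bar>e\<bar>/2) k + monom (r - \<bar>e\<bar>/2) k = monom r k" for k
      by (simp add: add_monom)
    have "smult (\<bar>e\<bar> / 2) (monom 1 (2 * i) + monom (2 * \<sigma>) (i + j) + monom 1 (2 * j)) +
        smult (r - \<bar>e\<bar> / 2) (monom 1 (2 * i)) + smult (r - \<bar>e\<bar> / 2) (monom 1 (2 * j))
      = monom (\<bar>e\<bar>/2) (2*i) + monom e (i+j) + monom (\<bar>e\<bar>/2) (2*j) +
        monom (r - \<bar>e\<bar>/2) (2*i) + monom (r - \<bar>e\<bar>/2) (2*j)"
      by (simp only: smult_add_right smult_monom e2 mult_1_right)
    also have "\<dots> = monom e (i+j) + (monom (\<bar>e\<bar>/2) (2*i) + monom (r - \<bar>e\<bar>/2) (2*i)) +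
        (monom (\<bar>e\<bar>/2) (2*j) + monom (r - \<bar>e\<bar>/2) (2*j))"
      by (simp only: add_ac)
    also have "\<dots> = monom e (i+j) + monom r (2*i) + monom r (2*j)"
      by (simp only: m1)
    also have "\<dots> = monom e (i + j) + smult r (monom 1 (2 * i) + monom 1 (2 * j))"
      by (simp add: smult_add_right smult_monom add.assoc)
    finally show ?thesis .
  qed
  have eq: "monom e (i+j) + smult r (monom 1 (2*i) + monom 1 (2*j)) =
      smult (\<bar>e\<bar>/2) ((A+B)^2) + smult (r - \<bar>e\<bar>/2) ((monom 1 i)^2) + smult (r - \<bar>e\<bar>/2) ((monom 1 j)^2)"
    unfolding sq sqA sqB s2 mult_1_left by (rule eq0[symmetric])
  have w1: "wsos (smult (\<bar>e\<bar>/2) ((A+B)^2))" by (rule wsos_term) simp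
  have w2: "wsos (smult (r - \<bar>e\<bar>/2) ((monom 1 i)^2))" using er by (intro wsos_term) simp
  have w3: "wsos (smult (r - \<bar>e\<bar>/2) ((monom 1 j)^2))" using er by (intro wsos_term) simp
  show ?thesis
    unfolding eq by (intro wsos_add w1 w2 w3)
qed


lemma dom:
  fixes E :: "rat poly"
  assumes dE: "degree E \<le> 2*M" and cE: "\<And>k. \<bar>coeff E k\<bar> \<le> 2*r"
  shows "wsos (E + smult r (Wp M))"
proof -
  have "E + smult r (Wp M) = (\<Sum>k\<le>2*M. monom (coeff E k) (k div 2 + (k - k div 2)) +
          smult r (monom 1 (2*(k div 2)) + monom 1 (2*(k - k div 2))))"
  proof -
    have "smult r (Wp M) = (\<Sum>k\<le>2*M. smult r (monom 1 (2*(k div 2)) + monom 1 (2*(k - k div 2))))"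
      by (simp only: Wp_def smult_sum_right)
    moreover have "(\<Sum>k\<le>2*M. monom (coeff E k) (k div 2 + (k - k div 2))) = E"
      using poly_as_sum_of_monoms'[OF dE] by simp
    ultimately show ?thesis by (simp only: sum.distrib)
  qed
  also have "wsos \<dots>"
    by (intro wsos_sum dom_term cE) simp
  finally show ?thesis .
qed

lemma landau_step:
  fixes p :: "rat poly" and r :: rat
  assumes r: "r > 0" and nn: "\<And>x. poly (Rp (p - smult r (Wp M))) x \<ge> 0"
    and dq: "degree (p - smult r (Wp M)) \<le> 2*M"
  shows "wsos p"
proof -
  define q where "q = p - smult r (Wp M)"
  obtain P where P: "\<And>n. wsos (P n)" "\<And>n. degree (P n) \<le> degree (Rp q)" "cconv P (Rp q)"
    using rat_approx_sos[of "Rp q"] nn unfolding q_def by blast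
  have r2: "(0::real) < of_rat (2*r)" using r by simp
  have "\<forall>k\<in>{..2*M}. eventually (\<lambda>n. dist (coeff (Rp (P n)) k) (coeff (Rp q) k) < of_rat (2*r)) sequentially"
    using P(3) r2 unfolding cconv_def by (auto intro: tendstoD)
  then have "eventually (\<lambda>n. \<forall>k\<in>{..2*M}. dist (coeff (Rp (P n)) k) (coeff (Rp q) k) < of_rat (2*r)) sequentially"
    by (intro eventually_ball_finite) auto
  then obtain n where n: "\<And>k. k \<le> 2*M \<Longrightarrow> dist (coeff (Rp (P n)) k) (coeff (Rp q) k) < of_rat (2*r)"
    unfolding eventually_sequentially by blast
  define E where "E = q - P n"
  have dE: "degree E \<le> 2*M"
  proof -
    have "degree (P n) \<le> degree q" using P(2)[of n] by (simp only: degree_Rp)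
    then show ?thesis unfolding E_def using dq q_def by (intro degree_diff_le) auto
  qed
  have cE: "\<bar>coeff E k\<bar> \<le> 2*r" for k
  proof (cases "k \<le> 2*M")
    case True
    have "dist (coeff (Rp (P n)) k) (coeff (Rp q) k) = of_rat \<bar>coeff E k\<bar>"
      by (simp add: E_def dist_real_def of_rat_diff[symmetric] of_rat_abs' abs_minus_commute)
    then have "(of_rat \<bar>coeff E k\<bar> :: real) < of_rat (2*r)" using n[OF True] by simp
    then show ?thesis by (simp only: of_rat_less)
  next
    case False
    then have "coeff E k = 0" using dE by (intro coeff_eq_0) simp
    then show ?thesis using r by simp
  qed
  have "p = P n + (E + smult r (Wp M))" unfolding E_def q_def by simp
  also have "wsos \<dots>" by (intro wsos_add P(1) dom dE cE)
  finally show ?thesis .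
qed

lemma Rp_eq_0_iff [simp]: "Rp p = 0 \<longleftrightarrow> p = 0"
  by (auto simp: poly_eq_iff)

lemma key:
  fixes e g :: "rat poly"
  assumes enz: "e \<noteq> 0" and pos: "\<And>\<xi>::real. poly (Rp e) \<xi> = 0 \<Longrightarrow> poly (Rp g) \<xi> > 0"
  shows "\<exists>G. wsos G \<and> e dvd (G - g)"
proof -
  define s where "s = degree g"
  define M where "M = degree e + s"
  define W where "W = Wp M"
  define V :: "rat poly" where "V = [:1, 0, 1:] ^ s"
  have dW: "degree W \<le> 2*M"
    unfolding W_def Wp_def
    by (intro degree_sum_le degree_add_le) (auto simp: degree_monom_eq)
  define Z where "Z = {\<xi>::real. poly (Rp e) \<xi> = 0}"
  have fZ: "finite Z" unfolding Z_def using enz by (intro poly_roots_finite) simp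
  have "\<forall>\<xi>\<in>Z. eventually (\<lambda>n. poly (Rp g) \<xi> - inverse (real (Suc n)) * poly (Rp W) \<xi> > 0) sequentially"
  proof
    fix \<xi> assume "\<xi> \<in> Z"
    then have gp: "poly (Rp g) \<xi> > 0" using pos by (simp add: Z_def)
    have "(\<lambda>n. poly (Rp g) \<xi> - inverse (real (Suc n)) * poly (Rp W) \<xi>) \<longlonglongrightarrow> poly (Rp g) \<xi> - 0 * poly (Rp W) \<xi>"
      by (intro tendsto_intros LIMSEQ_inverse_real_of_nat)
    then show "eventually (\<lambda>n. poly (Rp g) \<xi> - inverse (real (Suc n)) * poly (Rp W) \<xi> > 0) sequentially"
      using gp by (intro order_tendstoD(1)) simp_all
  qed
  then have "eventually (\<lambda>n. \<forall>\<xi>\<in>Z. poly (Rp g) \<xi> - inverse (real (Suc n)) * poly (Rp W) \<xi> > 0) sequentially"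
    using fZ by (intro eventually_ball_finite) auto
  then obtain n where n: "\<And>\<xi>. \<xi> \<in> Z \<Longrightarrow> poly (Rp g) \<xi> - inverse (real (Suc n)) * poly (Rp W) \<xi> > 0"
    unfolding eventually_sequentially by blast
  define r :: rat where "r = inverse (of_nat (Suc n))"
  have r0: "r > 0" unfolding r_def by simp
  have rr: "(of_rat r :: real) = inverse (real (Suc n))" unfolding r_def by (simp add: of_rat_inverse of_rat_add)
  define a where "a = Rp (g - smult r W)"
  define b where "b = Rp (e^2 * V)"
  have pV: "poly (Rp V) x > 0" for x
    by (simp add: V_def add_pos_nonneg)
  have b0: "poly b x \<ge> 0" for x
    unfolding b_def using pV[of x] by simp
  have ba: "poly a x > 0" if "poly b x = 0" for x
  proof -
    have "poly (Rp e) x = 0" using that pV[of x] by (simp add: b_def)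
    then have "x \<in> Z" by (simp add: Z_def)
    then show ?thesis using n[of x] by (simp add: a_def rr)
  qed
  have Vnz: "V \<noteq> 0" unfolding V_def by simp
  have degV: "degree V = 2 * s" unfolding V_def by (simp add: degree_power_eq)
  have degb: "degree (e^2 * V) = 2*M"
    using enz Vnz by (simp add: degree_mult_eq degree_power_eq degV M_def)
  have da: "degree (g - smult r W) \<le> 2*M"
    by (intro degree_diff_le) (use dW in \<open>auto simp: s_def M_def\<close>)
  have "degree a \<le> degree b" unfolding a_def b_def degree_Rp using da degb by simp
  moreover have "b \<noteq> 0" unfolding b_def using enz Vnz by simp
  ultimately obtain c where c: "\<forall>c'\<ge>c. \<forall>x. poly a x + c' * poly b x > 0"
    using pos_combination2[OF b0 ba] by blast
  obtain K :: nat where K: "c \<le> real K" using real_arch_simple by blast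
  define G where "G = g + smult (of_nat K) (e^2 * V)"
  have "G - g = e * smult (of_nat K) (e * V)" by (simp add: G_def power2_eq_square mult.assoc)
  then have "e dvd (G - g)" by (metis dvd_triv_left)
  moreover have "wsos G"
  proof (rule landau_step[OF r0, of G M, folded W_def])
    fix x :: real
    have "poly (Rp (G - smult r W)) x = poly a x + real K * poly b x"
      by (simp add: G_def a_def b_def algebra_simps)
    then show "poly (Rp (G - smult r W)) x \<ge> 0" using c K by (metis less_imp_le)
  next
    have "G - smult r W = (g - smult r W) + smult (of_nat K) (e^2 * V)"
      unfolding G_def by simp
    also have "degree \<dots> \<le> 2*M"
      using da degb by (intro degree_add_le) auto
    finally show "degree (G - smult r W) \<le> 2*M" .
  qed
  ultimately show ?thesis by blast
qed

lemma bezout_coprime: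
  fixes a b :: "rat poly"
  assumes "coprime a b"
  obtains u v where "u * a + v * b = 1"
proof -
  have "gcd a b = 1" using assms by simp
  then show ?thesis using bezout_coefficients_fst_snd[of a b] that by metis
qed

theorem mainTheorem1:
  fixes f g :: "rat poly" and n :: nat
  assumes "f \<noteq> 0"
    and "degree f = n"
    and "coprime (gcd f g) (f div gcd f g)"
    and "\<And>\<xi>::real. poly (map_poly of_rat f) \<xi> = 0 \<Longrightarrow> poly (map_poly of_rat g) \<xi> \<ge> 0"
  shows "\<exists>(N::nat) (\<omega>::nat \<Rightarrow> rat) (h::nat \<Rightarrow> rat poly).
           (\<forall>i\<in>{1..N}. \<omega> i > 0 \<and> degree (h i) < n) \<and>
           (\<Sum>i=1..N. smult (\<omega> i) ((h i)\<^sup>2)) mod f = g mod f"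
proof -
  define d where "d = gcd f g"
  define e where "e = f div d"
  have fde: "f = d * e" unfolding e_def d_def by simp
  have enz: "e \<noteq> 0" using fde assms(1) by auto
  have cop: "coprime d e" using assms(3) by (simp add: d_def e_def)
  have cop2: "coprime e g"
  proof (rule coprimeI)
    fix c assume c: "c dvd e" "c dvd g"
    then have "c dvd f" using fde by (metis dvd_mult2 mult.commute)
    then have "c dvd d" using c(2) unfolding d_def by (rule gcd_greatest)
    then show "is_unit c" using c(1) cop by (metis coprime_common_divisor)
  qed
  obtain u v where uv: "u * e + v * g = 1" using bezout_coprime[OF cop2] by blast
  have pos: "poly (Rp g) \<xi> > 0" if "poly (Rp e) \<xi> = 0" for \<xi> :: real
  proof -
    have "poly (Rp (u * e + v * g)) \<xi> = 1" using uv by simp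
    then have "poly (Rp g) \<xi> \<noteq> 0" using that by auto
    moreover have "poly (Rp f) \<xi> = 0" using that fde by simp
    then have "poly (Rp g) \<xi> \<ge> 0" using assms(4) unfolding Rp_def by blast
    ultimately show ?thesis by simp
  qed
  obtain G where G: "wsos G" "e dvd (G - g)" using key[OF enz pos] by blast
  obtain u1 v1 where uv1: "u1 * d + v1 * e = 1" using bezout_coprime[OF cop] by blast
  define E where "E = u1 * d"
  define P where "P = E^2 * G"
  have wP: "wsos P" unfolding P_def using G(1) by (rule wsos_mult_sq)
  have dd: "d dvd (P - g)"
  proof (rule dvd_diff)
    show "d dvd P" unfolding P_def E_def by (simp add: power2_eq_square)
    show "d dvd g" unfolding d_def by simp
  qed
  have E1: "E - 1 = - (v1 * e)" using uv1 unfolding E_def by (simp add: algebra_simps)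
  have Pg: "P - g = (G - g) + (E - 1) * ((E + 1) * G)"
    unfolding P_def by (simp add: algebra_simps power2_eq_square)
  have "e dvd (E - 1) * ((E + 1) * G)" unfolding E1 by simp
  then have "e dvd (G - g) + (E - 1) * ((E + 1) * G)" using G(2) by (rule dvd_add[rotated])
  then have ed: "e dvd (P - g)" by (simp only: Pg)
  have fdvd: "f dvd (P - g)" unfolding fde using dd ed cop by (rule divides_mult)
  from wsos_repr[OF wP] obtain N :: nat and \<omega> :: "nat \<Rightarrow> rat" and h :: "nat \<Rightarrow> rat poly"
    where \<omega>: "\<forall>i\<in>{1..N}. \<omega> i > 0" and Psum: "P = (\<Sum>i=1..N. smult (\<omega> i) ((h i)\<^sup>2))"
    by (elim exE conjE)
  show ?thesis
  proof (cases "n = 0")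
    case True
    have "g mod f = 0"
      using degree_mod_less[OF assms(1), of g] assms(2) True by auto
    then show ?thesis
      by (intro exI[of _ "0::nat"]) simp
  next
    case False
    define h' where "h' i = h i mod f" for i
    have dh': "degree (h' i) < n" for i
    proof (cases "h' i = 0")
      case True then show ?thesis using False by simp
    next
      case False then show ?thesis
        unfolding h'_def using degree_mod_less'[OF assms(1)] assms(2) by (simp add: h'_def)
    qed
    have "f dvd (\<Sum>i=1..N. smult (\<omega> i) ((h' i)\<^sup>2)) - P"
    proof -
      have "(\<Sum>i=1..N. smult (\<omega> i) ((h' i)\<^sup>2)) - P =
            (\<Sum>i=1..N. smult (\<omega> i) ((h' i - h i) * (h' i + h i)))"
      proof -
        have "(\<Sum>i=1..N. smult (\<omega> i) ((h' i)\<^sup>2)) - P =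
          (\<Sum>i=1..N. smult (\<omega> i) ((h' i)\<^sup>2) - smult (\<omega> i) ((h i)\<^sup>2))"
          unfolding Psum by (rule sum_subtractf[symmetric])
        also have "\<dots> = (\<Sum>i=1..N. smult (\<omega> i) ((h' i - h i) * (h' i + h i)))"
        proof (intro sum.cong refl)
          fix i
          have "(h' i)\<^sup>2 - (h i)\<^sup>2 = (h' i - h i) * (h' i + h i)"
            by (simp add: power2_eq_square algebra_simps)
          then show "smult (\<omega> i) ((h' i)\<^sup>2) - smult (\<omega> i) ((h i)\<^sup>2) = smult (\<omega> i) ((h' i - h i) * (h' i + h i))"
            by (metis smult_diff_right)
        qed
        finally show ?thesis .
      qed
      also have "f dvd \<dots>"
      proof (intro dvd_sum)
        fix i
        have "h' i - h i = - (h i div f * f)"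
          unfolding h'_def using div_mult_mod_eq[of "h i" f] by (simp add: algebra_simps)
        then have "f dvd h' i - h i" by simp
        then show "f dvd smult (\<omega> i) ((h' i - h i) * (h' i + h i))"
          by (simp add: dvd_smult)
      qed
      finally show ?thesis .
    qed
    then have "f dvd (\<Sum>i=1..N. smult (\<omega> i) ((h' i)\<^sup>2)) - g"
      using dvd_add[OF _ fdvd] by (metis diff_add_cancel add_diff_eq)
    then have "(\<Sum>i=1..N. smult (\<omega> i) ((h' i)\<^sup>2)) mod f = g mod f"
      by (simp add: mod_eq_dvd_iff)
    then show ?thesis using \<omega> dh' by blast
  qed
qed

end
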